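(* Let $X$ be a random variable with values in a set $\mathcal{X}$, let $\theta=\theta(X)\in\mathbb{R}$ be a statistic of $X$, and let $L=(X_1,\dots,X_n)$ be an i.i.d. sample of $X$. Fix a batch size $m\ge 1$ and let $\hat\theta$ be an estimator of $\theta$ defined on samples of size $m$. Let $\mathcal{U}$ be the finite set (of cardinality $n^m$) of all functions $u:\{1,\dots,m\}\to\{1,\dots,n\}$, and for $u\in\mathcal U$ write $L_u=(X_{u(1)},\dots,X_{u(m)})$. Assume $\mathbb{E}_L\big(\hat\theta(L_u)^2\big)<\infty$ for every $u\in\mathcal U$. For $N\ge 1$ let $B=(U^1,\dots,U^N)$ be i.i.d. uniform on $\mathcal U$, independent of $L$, and define the bagged estimator $$\tilde\theta(L,B)=\frac1N\sum_{i=1}^N\hat\theta(L_{U^i}).$$ Let $U$ denote a random variable uniform on $\mathcal U$ independent of $L$, and let $\mathbb{E}_U,\mathrm{Var}_U$ denote expectation and variance with respect to $U$ only (with $L$ fixed). Then $$\mathrm{MSE}(\tilde\theta):=\mathbb{E}_{(L,B)}\big((\tilde\theta(L,B)-\theta)^2\big)=\frac1N F+G,$$ where $$F=\mathbb{E}_L\big(\mathrm{Var}_U(\hat\theta(L_U))\big)\ge 0,\qquad G=\mathrm{Var}_L\big(\mathbb{E}_U(\hat\theta(L_U))\big)+\big(\mathbb{E}_L(\mathbb{E}_U(\hat\theta(L_U)))-\theta\big)^2\ge 0$$ do not depend on $N$. More precisely: (1) $\mathbb{E}_{(L,B)}(\tilde\theta(L,B))=\mathbb{E}_L\big(\mathbb{E}_U(\hat\theta(L_U))\big)$;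 (2) $\mathrm{Var}_{(L,B)}(\tilde\theta(L,B))=\frac1N\mathbb{E}_L\big(\mathrm{Var}_U(\hat\theta(L_U))\big)+\mathrm{Var}_L\big(\mathbb{E}_U(\hat\theta(L_U))\big)$.
   Context: $\mathbb{E}_L,\mathrm{Var}_L$ denote expectation/variance with respect to the sample $L$, and $\mathbb{E}_{(L,B)},\mathrm{Var}_{(L,B)}$ with respect to the pair $(L,B)$. The sampling $L_U$ is uniform sampling with replacement of $m$ points from $L$. *)

theory Defs
  imports "HOL-Probability.Probability"
begin

text \<open>Sub-sample L_u = (X_{u(0)},...,X_{u(m-1)}) of a sample L indexed by {..<n};
  indices are 0-based.\<close>
definition sub_sample :: "nat \<Rightarrow> (nat \<Rightarrow> 'a) \<Rightarrow> (nat \<Rightarrow> nat) \<Rightarrow> (nat \<Rightarrow> 'a)" where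
  "sub_sample m L u = restrict (\<lambda>j. L (u j)) {..<m}"

definition var_of :: "'b measure \<Rightarrow> ('b \<Rightarrow> real) \<Rightarrow> real" where
  "var_of P f = (\<integral>x. (f x - (\<integral>y. f y \<partial>P))\<^sup>2 \<partial>P)"

definition bagged :: "nat \<Rightarrow> nat \<Rightarrow> ((nat \<Rightarrow> 'a) \<Rightarrow> real) \<Rightarrow> (nat \<Rightarrow> 'a) \<Rightarrow> (nat \<Rightarrow> nat \<Rightarrow> nat) \<Rightarrow> real" where
  "bagged m N est L B = (\<Sum>i<N. est (sub_sample m L (B i))) / real N"

end

theory Submission
  imports Defs
begin

lemma var_of_eq:
  fixes f :: "'b \<Rightarrow> real"
  assumes "prob_space P" "integrable P f" "integrable P (\<lambda>x. (f x)\<^sup>2)"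
  shows "var_of P f = (\<integral>x. (f x)\<^sup>2 \<partial>P) - (\<integral>x. f x \<partial>P)\<^sup>2"
proof -
  interpret prob_space P by fact
  define c where "c = (\<integral>x. f x \<partial>P)"
  have "var_of P f = (\<integral>x. (f x)\<^sup>2 - 2 * c * f x + c\<^sup>2 \<partial>P)"
    unfolding var_of_def c_def[symmetric] by (rule Bochner_Integration.integral_cong) (auto simp: power2_eq_square algebra_simps)
  also have "\<dots> = (\<integral>x. (f x)\<^sup>2 \<partial>P) - 2 * c * c + c\<^sup>2"
    using assms(2,3) by (simp add: c_def prob_space)
  finally show ?thesis by (simp add: c_def power2_eq_square)
qed

lemma sum_if_eq:
  fixes a b :: real
  assumes "i < N"
  shows "(\<Sum>j<N. if i = j then a else b) = a + (real N - 1) * b"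
proof -
  have "(\<Sum>j<N. if i = j then a else b) = (\<Sum>j<N. b + (if i = j then a - b else 0))"
    by (rule sum.cong) auto
  also have "\<dots> = real N * b + (a - b)" using assms by (simp add: sum.distrib)
  finally show ?thesis by (simp add: algebra_simps)
qed

lemma integrable_uc[simp]: "finite A \<Longrightarrow> integrable (uniform_count_measure A) (f::_\<Rightarrow>real)"
  unfolding uniform_count_measure_def by (rule integrable_point_measure_finite)

lemma sq_prod_integrable:
  fixes f g :: "'b \<Rightarrow> real"
  assumes "integrable P (\<lambda>x. (f x)\<^sup>2)" "integrable P (\<lambda>x. (g x)\<^sup>2)"
    "f \<in> borel_measurable P" "g \<in> borel_measurable P"
  shows "integrable P (\<lambda>x. f x * g x)"
proof (rule Bochner_Integration.integrable_bound[where f="\<lambda>x. (f x)\<^sup>2 + (g x)\<^sup>2"])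
  show "integrable P (\<lambda>x. (f x)\<^sup>2 + (g x)\<^sup>2)" using assms by simp
  show "(\<lambda>x. f x * g x) \<in> borel_measurable P" using assms(3,4) by (rule borel_measurable_times)
  show "AE x in P. norm (f x * g x) \<le> norm ((f x)\<^sup>2 + (g x)\<^sup>2)"
  proof (rule AE_I2)
    fix x
    have "0 \<le> (\<bar>f x\<bar> - \<bar>g x\<bar>)\<^sup>2" by simp
    then have "2 * \<bar>f x * g x\<bar> \<le> (f x)\<^sup>2 + (g x)\<^sup>2"
      by (simp add: power2_eq_square algebra_simps abs_mult)
    then show "norm (f x * g x) \<le> norm ((f x)\<^sup>2 + (g x)\<^sup>2)" by simp
  qed
qed

lemma PB_facts:
  fixes h :: "'c \<Rightarrow> real" and U :: "'c set" and N :: nat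
  assumes U: "finite U" "U \<noteq> {}" and N: "N \<ge> 1"
  defines "PB \<equiv> PiM {..<N} (\<lambda>_. uniform_count_measure U)"
  defines "bg \<equiv> (\<lambda>B. (\<Sum>i<N. h (B i)) / real N)"
  shows "integrable PB bg" "integrable PB (\<lambda>B. (bg B)\<^sup>2)"
    "(\<integral>B. bg B \<partial>PB) = (\<Sum>u\<in>U. h u) / card U"
    "(\<integral>B. (bg B)\<^sup>2 \<partial>PB) = (\<Sum>u\<in>U. (h u)\<^sup>2) / card U / real N
        + (1 - 1 / real N) * ((\<Sum>u\<in>U. h u) / card U)\<^sup>2"
proof -
  let ?PU = "uniform_count_measure U"
  interpret PS: product_sigma_finite "\<lambda>_::nat. ?PU"
    unfolding product_sigma_finite_def
    using prob_space_uniform_count_measure[OF U] prob_space_imp_sigma_finite by blast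
  have PUp: "prob_space ?PU" using prob_space_uniform_count_measure[OF U] .
  have hm: "h \<in> borel_measurable ?PU"
    by (simp add: measurable_cong_sets[OF sets_uniform_count_measure_count_space refl])
  have hm2: "(\<lambda>x. h x * h x) \<in> borel_measurable ?PU"
    by (simp add: measurable_cong_sets[OF sets_uniform_count_measure_count_space refl])
  have EU: "(\<integral>x. f x \<partial>?PU) = (\<Sum>u\<in>U. f u) / card U" for f :: "'c \<Rightarrow> real"
    using U by (simp add: integral_uniform_count_measure)
  have one: "(\<integral>B. h (B i) \<partial>PB) = (\<Sum>u\<in>U. h u) / card U"
     "integrable PB (\<lambda>B. h (B i))" if i: "i < N" for i
  proof -
    define f where "f = (\<lambda>k::nat. if k = i then h else (\<lambda>_. 1::real))"
    have eq: "(\<Prod>k<N. f k (B k)) = h (B i)" for B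
    proof -
      have "(\<Prod>k<N. f k (B k)) = (\<Prod>k<N. if k = i then h (B k) else 1)"
        by (rule prod.cong) (auto simp: f_def)
      then show ?thesis using i by (simp add: prod.delta)
    qed
    have "(\<integral>B. (\<Prod>k<N. f k (B k)) \<partial>PB) = (\<Prod>k<N. integral\<^sup>L ?PU (f k))"
      unfolding PB_def by (rule PS.product_integral_prod) (use U in auto)
    also have "\<dots> = (\<Prod>k<N. if k = i then integral\<^sup>L ?PU h else 1)"
      by (rule prod.cong) (auto simp: f_def prob_space.prob_space[OF PUp])
    also have "\<dots> = integral\<^sup>L ?PU h"
      using i by (simp add: prod.delta)
    finally show "(\<integral>B. h (B i) \<partial>PB) = (\<Sum>u\<in>U. h u) / card U" by (simp add: eq EU)
    have "integrable PB (\<lambda>B. \<Prod>k<N. f k (B k))"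
      unfolding PB_def by (rule PS.product_integrable_prod) (use U in auto)
    then show "integrable PB (\<lambda>B. h (B i))" by (simp add: eq)
  qed
  have two: "(\<integral>B. h (B i) * h (B j) \<partial>PB) = (if i = j then (\<Sum>u\<in>U. (h u)\<^sup>2) / card U
         else ((\<Sum>u\<in>U. h u) / card U)\<^sup>2)"
     "integrable PB (\<lambda>B. h (B i) * h (B j))" if i: "i < N" "j < N" for i j
  proof -
    define f where "f = (\<lambda>k::nat. if i = j then (if k = i then (\<lambda>x. h x * h x) else (\<lambda>_. 1::real))
        else if k = i \<or> k = j then h else (\<lambda>_. 1::real))"
    have eq: "(\<Prod>k<N. f k (B k)) = h (B i) * h (B j)" for B
    proof (cases "i = j")
      case True
      have "(\<Prod>k<N. f k (B k)) = (\<Prod>k<N. if k = i then h (B k) * h (B k) else 1)"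
        by (rule prod.cong) (auto simp: f_def True)
      then show ?thesis using i True by (simp add: prod.delta)
    next
      case False
      have "(\<Prod>k<N. f k (B k)) = (\<Prod>k<N. (if k = i then h (B k) else 1) * (if k = j then h (B k) else 1))"
        by (rule prod.cong) (use False in \<open>auto simp: f_def\<close>)
      then show ?thesis using i False by (simp add: prod.delta prod.distrib)
    qed
    have "(\<integral>B. (\<Prod>k<N. f k (B k)) \<partial>PB) = (\<Prod>k<N. integral\<^sup>L ?PU (f k))"
      unfolding PB_def by (rule PS.product_integral_prod) (use U in auto)
    also have "\<dots> = (if i = j then (\<Sum>u\<in>U. (h u)\<^sup>2) / card U
         else ((\<Sum>u\<in>U. h u) / card U)\<^sup>2)"
    proof (cases "i = j")
      case True
      have "(\<Prod>k<N. integral\<^sup>L ?PU (f k)) = (\<Prod>k<N. if k = i then integral\<^sup>L ?PU (\<lambda>x. h x * h x) else 1)"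
        by (rule prod.cong) (auto simp: f_def True prob_space.prob_space[OF PUp])
      then show ?thesis using i True by (simp add: prod.delta EU power2_eq_square)
    next
      case False
      have "(\<Prod>k<N. integral\<^sup>L ?PU (f k)) = (\<Prod>k<N. (if k = i then integral\<^sup>L ?PU h else 1) * (if k = j then integral\<^sup>L ?PU h else 1))"
        by (rule prod.cong) (use False in \<open>auto simp: f_def prob_space.prob_space[OF PUp]\<close>)
      then show ?thesis using i False by (simp add: prod.delta prod.distrib EU power2_eq_square)
    qed
    finally show "(\<integral>B. h (B i) * h (B j) \<partial>PB) = (if i = j then (\<Sum>u\<in>U. (h u)\<^sup>2) / card U
         else ((\<Sum>u\<in>U. h u) / card U)\<^sup>2)" by (simp add: eq)
    have "integrable PB (\<lambda>B. \<Prod>k<N. f k (B k))"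
      unfolding PB_def by (rule PS.product_integrable_prod) (use U in auto)
    then show "integrable PB (\<lambda>B. h (B i) * h (B j))" by (simp add: eq)
  qed
  have sq: "(bg B)\<^sup>2 = (\<Sum>i<N. \<Sum>j<N. h (B i) * h (B j)) / (real N)\<^sup>2" for B
    unfolding bg_def power2_eq_square by (simp add: sum_product)
  have "integrable PB (\<lambda>B. \<Sum>i<N. h (B i))"
    by (rule Bochner_Integration.integrable_sum) (simp add: one(2))
  then show "integrable PB bg" unfolding bg_def by (rule integrable_divide_zero)
  have "integrable PB (\<lambda>B. \<Sum>i<N. \<Sum>j<N. h (B i) * h (B j))"
    by (intro Bochner_Integration.integrable_sum) (simp add: two(2))
  then show "integrable PB (\<lambda>B. (bg B)\<^sup>2)" unfolding sq by (rule integrable_divide_zero)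
  show "(\<integral>B. bg B \<partial>PB) = (\<Sum>u\<in>U. h u) / card U"
  proof -
    have "(\<Sum>x<N. \<integral>B. h (B x) \<partial>PB) = (\<Sum>x<N. (\<Sum>u\<in>U. h u) / card U)"
      by (rule sum.cong) (auto simp: one(1))
    then show ?thesis unfolding bg_def using one N by (simp add: Bochner_Integration.integral_sum)
  qed
  have "(\<integral>B. (bg B)\<^sup>2 \<partial>PB) = (\<Sum>i<N. \<Sum>j<N. (\<integral>B. h (B i) * h (B j) \<partial>PB)) / (real N)\<^sup>2"
  proof -
    have "(\<integral>B. (\<Sum>i<N. \<Sum>j<N. h (B i) * h (B j)) \<partial>PB) = (\<Sum>i<N. \<integral>B. (\<Sum>j<N. h (B i) * h (B j)) \<partial>PB)"
      by (rule Bochner_Integration.integral_sum) (intro Bochner_Integration.integrable_sum, simp add: two(2))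
    also have "\<dots> = (\<Sum>i<N. \<Sum>j<N. (\<integral>B. h (B i) * h (B j) \<partial>PB))"
      by (rule sum.cong[OF refl], rule Bochner_Integration.integral_sum) (simp add: two(2))
    finally show ?thesis unfolding sq by simp
  qed
  also have "\<dots> = (\<Sum>i<N. (\<Sum>u\<in>U. (h u)\<^sup>2) / card U + (real N - 1) * ((\<Sum>u\<in>U. h u) / card U)\<^sup>2) / (real N)\<^sup>2"
  proof -
    have "(\<Sum>j<N. (\<integral>B. h (B i) * h (B j) \<partial>PB)) = (\<Sum>u\<in>U. (h u)\<^sup>2) / card U + (real N - 1) * ((\<Sum>u\<in>U. h u) / card U)\<^sup>2"
      if "i < N" for i
      using that by (simp add: two(1) sum_if_eq)
    then show ?thesis by (intro arg_cong[where f="\<lambda>x. x / _"] sum.cong) auto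
  qed
  also have "\<dots> = (\<Sum>u\<in>U. (h u)\<^sup>2) / card U / real N
        + (1 - 1 / real N) * ((\<Sum>u\<in>U. h u) / card U)\<^sup>2"
  proof -
    have "real N > 0" using N by simp
    moreover have "real (card U) > 0" using U by (simp add: card_gt_0_iff)
    ultimately show ?thesis by (simp add: field_simps power2_eq_square)
  qed
  finally show "(\<integral>B. (bg B)\<^sup>2 \<partial>PB) = (\<Sum>u\<in>U. (h u)\<^sup>2) / card U / real N
        + (1 - 1 / real N) * ((\<Sum>u\<in>U. h u) / card U)\<^sup>2" .
qed

theorem theorem1:
  fixes M :: "'a measure" and \<theta> :: real and est :: "(nat \<Rightarrow> 'a) \<Rightarrow> real"
    and n m N :: nat
  assumes "prob_space M"
    and "n \<ge> 1" and "m \<ge> 1" and "N \<ge> 1"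
    and "est \<in> borel_measurable (PiM {..<m} (\<lambda>_. M))"
    and "\<forall>u \<in> {..<m} \<rightarrow>\<^sub>E {..<n}.
           integrable (PiM {..<n} (\<lambda>_. M)) (\<lambda>L. (est (sub_sample m L u))\<^sup>2)"
  defines "\<U> \<equiv> {..<m} \<rightarrow>\<^sub>E {..<n}"
    and "PL \<equiv> PiM {..<n} (\<lambda>_. M)"
    and "PU \<equiv> uniform_count_measure ({..<m} \<rightarrow>\<^sub>E {..<n})"
  defines "PLB \<equiv> PL \<Otimes>\<^sub>M PiM {..<N} (\<lambda>_. PU)"
    and "EU \<equiv> (\<lambda>L. \<integral>u. est (sub_sample m L u) \<partial>PU)"
    and "VU \<equiv> (\<lambda>L. var_of PU (\<lambda>u. est (sub_sample m L u)))"
    and "bag \<equiv> (\<lambda>z. bagged m N est (fst z) (snd z))"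
  defines "F \<equiv> (\<integral>L. VU L \<partial>PL)"
    and "G \<equiv> var_of PL EU + ((\<integral>L. EU L \<partial>PL) - \<theta>)\<^sup>2"
  shows "(\<integral>z. (bag z - \<theta>)\<^sup>2 \<partial>PLB) = F / real N + G
         \<and> F \<ge> 0 \<and> G \<ge> 0
         \<and> (\<integral>z. bag z \<partial>PLB) = (\<integral>L. EU L \<partial>PL)
         \<and> var_of PLB bag = F / real N + var_of PL EU"
proof -
  let ?g = "\<lambda>u L. est (sub_sample m L u)"
  define PB where "PB = PiM {..<N} (\<lambda>_. PU)"
  have PLB': "PLB = PL \<Otimes>\<^sub>M PB" unfolding PLB_def PB_def ..
  have Ufin: "finite \<U>" unfolding \<U>_def by (simp add: finite_PiE)
  have Une: "\<U> \<noteq> {}"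
  proof -
    have "(\<lambda>j\<in>{..<m}. 0) \<in> \<U>" unfolding \<U>_def using assms(2) by auto
    then show ?thesis by blast
  qed
  have PU': "PU = uniform_count_measure \<U>" unfolding PU_def \<U>_def ..
  have PUp: "prob_space PU" unfolding PU' using Ufin Une by (rule prob_space_uniform_count_measure)
  have PBp: "prob_space PB" unfolding PB_def using PUp by (intro prob_space_PiM)
  have PLp: "prob_space PL" unfolding PL_def using assms(1) by (intro prob_space_PiM)
  have PLBp: "prob_space PLB" unfolding PLB' using PLp PBp by (rule prob_space_pair)
  interpret PLBs: pair_sigma_finite PL PB
    by (simp add: pair_sigma_finite_def prob_space_imp_sigma_finite[OF PLp] prob_space_imp_sigma_finite[OF PBp])
  have cpos: "real (card \<U>) > 0" using Ufin Une by (simp add: card_gt_0_iff)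
  have Npos: "real N > 0" using assms(4) by simp
  have gm: "?g u \<in> borel_measurable PL" if u: "u \<in> \<U>" for u
  proof -
    have "(\<lambda>L. sub_sample m L u) \<in> measurable PL (PiM {..<m} (\<lambda>_. M))"
      unfolding sub_sample_def PL_def
    proof (rule measurable_restrict)
      fix j assume "j \<in> {..<m}"
      then have "u j \<in> {..<n}" using u unfolding \<U>_def by auto
      then show "(\<lambda>x. x (u j)) \<in> measurable (PiM {..<n} (\<lambda>_. M)) M"
        by (rule measurable_component_singleton)
    qed
    then show ?thesis using assms(5) by (rule measurable_compose)
  qed
  have g2i: "integrable PL (\<lambda>L. (?g u L)\<^sup>2)" if "u \<in> \<U>" for u
    using assms(6) that unfolding \<U>_def PL_def by blast
  have ggi: "integrable PL (\<lambda>L. ?g u L * ?g v L)" if "u \<in> \<U>" "v \<in> \<U>" for u v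
    using that by (intro sq_prod_integrable g2i gm)
  have gi: "integrable PL (?g u)" if "u \<in> \<U>" for u
    using PLp[unfolded prob_space_def, THEN conjunct1] gm[OF that] g2i[OF that]
    by (rule finite_measure.square_integrable_imp_integrable)
  define S1 where "S1 = (\<lambda>L. \<Sum>u\<in>\<U>. ?g u L)"
  define S2 where "S2 = (\<lambda>L. \<Sum>u\<in>\<U>. (?g u L)\<^sup>2)"
  have EUeq: "EU L = S1 L / card \<U>" for L
    unfolding EU_def PU' S1_def using Ufin by (simp add: integral_uniform_count_measure)
  have VUeq: "VU L = S2 L / card \<U> - (S1 L / card \<U>)\<^sup>2" for L
  proof -
    have "VU L = (\<integral>u. (?g u L)\<^sup>2 \<partial>PU) - (EU L)\<^sup>2"
      unfolding VU_def EU_def using PUp by (rule var_of_eq) (use Ufin in \<open>simp_all add: PU'\<close>)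
    then show ?thesis unfolding EUeq unfolding PU' S2_def using Ufin
      by (simp add: integral_uniform_count_measure)
  qed
  have S1i: "integrable PL S1" unfolding S1_def using gi by auto
  have S2i: "integrable PL S2" unfolding S2_def using g2i by auto
  have S11i: "integrable PL (\<lambda>L. (S1 L)\<^sup>2)"
  proof -
    have "integrable PL (\<lambda>L. \<Sum>u\<in>\<U>. \<Sum>v\<in>\<U>. ?g u L * ?g v L)"
      using ggi by (intro Bochner_Integration.integrable_sum) auto
    then show ?thesis unfolding S1_def power2_eq_square by (simp add: sum_product)
  qed
  have EUi: "integrable PL EU" unfolding EUeq using S1i by simp
  have EU2i: "integrable PL (\<lambda>L. (EU L)\<^sup>2)" unfolding EUeq using S11i
    by (simp add: power_divide)
  have VUi: "integrable PL VU" unfolding VUeq using S2i S11i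
    by (simp add: power_divide)
  have inner: "integrable PB (\<lambda>B. bag (L, B))" "integrable PB (\<lambda>B. (bag (L, B))\<^sup>2)"
    "(\<integral>B. bag (L, B) \<partial>PB) = EU L"
    "(\<integral>B. (bag (L, B))\<^sup>2 \<partial>PB) = VU L / real N + (EU L)\<^sup>2" for L
  proof -
    note PF = PB_facts[OF Ufin Une assms(4), of "\<lambda>u. ?g u L"]
    have bg: "bag (L, B) = (\<Sum>i<N. ?g (B i) L) / real N" for B
      unfolding bag_def bagged_def by simp
    show "integrable PB (\<lambda>B. bag (L, B))" "integrable PB (\<lambda>B. (bag (L, B))\<^sup>2)"
      unfolding bg PB_def PU' using PF(1,2) by simp_all
    show "(\<integral>B. bag (L, B) \<partial>PB) = EU L"
      unfolding bg PB_def PU' EUeq using PF(3) by (simp add: S1_def)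
    show "(\<integral>B. (bag (L, B))\<^sup>2 \<partial>PB) = VU L / real N + (EU L)\<^sup>2"
    proof -
      have alg: "a / real N + (1 - 1 / real N) * b = (a - b) / real N + b" for a b
        using Npos by (simp add: field_simps)
      have "(\<integral>B. (bag (L, B))\<^sup>2 \<partial>PB) = S2 L / card \<U> / real N + (1 - 1 / real N) * (S1 L / card \<U>)\<^sup>2"
        unfolding bg PB_def PU' S1_def S2_def using PF(4) by simp
      then show ?thesis unfolding EUeq VUeq by (simp only: alg)
    qed
  qed
  have bagm: "bag \<in> borel_measurable PLB"
  proof -
    have sm: "(\<lambda>z. snd z i) \<in> measurable PLB PU" if "i < N" for i
      unfolding PLB' PB_def using that
      by (intro measurable_compose[OF measurable_snd measurable_component_singleton]) auto
    have ss: "{w \<in> space PLB. snd w i = u} \<in> sets PLB" if "i < N" "u \<in> \<U>" for i u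
    proof -
      have "(\<lambda>z. snd z i) -` {u} \<inter> space PLB \<in> sets PLB"
        by (rule measurable_sets[OF sm[OF that(1)]]) (use that(2) in \<open>simp add: PU' sets_uniform_count_measure\<close>)
      moreover have "(\<lambda>z. snd z i) -` {u} \<inter> space PLB = {w \<in> space PLB. snd w i = u}" by auto
      ultimately show ?thesis by simp
    qed
    have fm: "(\<lambda>z. ?g u (fst z)) \<in> borel_measurable PLB" if "u \<in> \<U>" for u
      unfolding PLB' by (rule measurable_compose[OF measurable_fst gm[OF that]])
    have m2: "(\<lambda>z. (\<Sum>i<N. \<Sum>u\<in>\<U>. indicator {w \<in> space PLB. snd w i = u} z * ?g u (fst z)) / real N)
       \<in> borel_measurable PLB"
    proof -
      have t: "(\<lambda>z. indicator {w \<in> space PLB. snd w i = u} z * ?g u (fst z)) \<in> borel_measurable PLB"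
        if "i < N" "u \<in> \<U>" for i u
        by (rule borel_measurable_times[OF borel_measurable_indicator[OF ss[OF that]] fm[OF that(2)]])
      have "(\<lambda>z. \<Sum>i<N. \<Sum>u\<in>\<U>. indicator {w \<in> space PLB. snd w i = u} z * ?g u (fst z)) \<in> borel_measurable PLB"
        by (rule borel_measurable_sum, rule borel_measurable_sum) (use t in simp)
      then show ?thesis by (rule borel_measurable_divide[OF _ borel_measurable_const])
    qed
    have bag_eq: "bag z = (\<Sum>i<N. \<Sum>u\<in>\<U>. indicator {w \<in> space PLB. snd w i = u} z * ?g u (fst z)) / real N"
      if z: "z \<in> space PLB" for z
    proof -
      have sz: "snd z \<in> space PB" using z unfolding PLB' space_pair_measure mem_Times_iff by (rule conjunct2)
      have "(\<Sum>u\<in>\<U>. indicator {w \<in> space PLB. snd w i = u} z * ?g u (fst z)) = ?g (snd z i) (fst z)"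
        if i: "i < N" for i
      proof -
        have "snd z \<in> PiE {..<N} (\<lambda>_. \<U>)" using sz unfolding PB_def PU' space_PiM space_uniform_count_measure .
        then have si: "snd z i \<in> \<U>" by (rule PiE_mem) (simp add: i)
        have ind: "indicator {w \<in> space PLB. snd w i = u} z * ?g u (fst z) = (if u = snd z i then ?g u (fst z) else 0)" for u
          unfolding indicator_def using z by auto
        have "(\<Sum>u\<in>\<U>. indicator {w \<in> space PLB. snd w i = u} z * ?g u (fst z))
           = (\<Sum>u\<in>\<U>. if u = snd z i then ?g u (fst z) else 0)"
          by (simp only: ind)
        also have "\<dots> = ?g (snd z i) (fst z)" using si Ufin by (simp add: sum.delta')
        finally show ?thesis .
      qed
      then have "(\<Sum>i<N. \<Sum>u\<in>\<U>. indicator {w \<in> space PLB. snd w i = u} z * ?g u (fst z))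
          = (\<Sum>i<N. ?g (snd z i) (fst z))" by (intro sum.cong) auto
      then show ?thesis unfolding bag_def bagged_def by simp
    qed
    have "bag \<in> borel_measurable PLB \<longleftrightarrow> (\<lambda>z. (\<Sum>i<N. \<Sum>u\<in>\<U>. indicator {w \<in> space PLB. snd w i = u} z * ?g u (fst z)) / real N) \<in> borel_measurable PLB"
      by (rule measurable_cong) (rule bag_eq)
    with m2 show ?thesis by simp
  qed
  have bag2i: "integrable PLB (\<lambda>z. (bag z)\<^sup>2)"
    unfolding PLB'
  proof (rule PLBs.Fubini_integrable)
    show "(\<lambda>z. (bag z)\<^sup>2) \<in> borel_measurable (PL \<Otimes>\<^sub>M PB)" using bagm unfolding PLB' by simp
    have "integrable PL (\<lambda>L. VU L / real N + (EU L)\<^sup>2)" using VUi EU2i by simp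
    moreover have "integrable PL (\<lambda>L. \<integral>B. norm ((bag (L, B))\<^sup>2) \<partial>PB) \<longleftrightarrow> integrable PL (\<lambda>L. VU L / real N + (EU L)\<^sup>2)"
      by (rule Bochner_Integration.integrable_cong[OF refl]) (simp add: inner(4) abs_power2)
    ultimately show "integrable PL (\<lambda>L. \<integral>B. norm ((bag (L, B))\<^sup>2) \<partial>PB)" by simp
    show "AE L in PL. integrable PB (\<lambda>B. (bag (L, B))\<^sup>2)" using inner(2) by simp
  qed
  have bagi: "integrable PLB bag"
    using PLBp[unfolded prob_space_def, THEN conjunct1] bagm bag2i
    by (rule finite_measure.square_integrable_imp_integrable)
  have Ebag: "(\<integral>z. bag z \<partial>PLB) = (\<integral>L. EU L \<partial>PL)"
  proof -
    have "(\<integral>z. bag z \<partial>PLB) = (\<integral>L. (\<integral>B. bag (L, B) \<partial>PB) \<partial>PL)"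
      unfolding PLB' using bagi unfolding PLB' by (rule PLBs.integral_fst'[symmetric])
    then show ?thesis by (simp add: inner(3))
  qed
  have Ebag2: "(\<integral>z. (bag z)\<^sup>2 \<partial>PLB) = F / real N + (\<integral>L. (EU L)\<^sup>2 \<partial>PL)"
  proof -
    have "(\<integral>z. (bag z)\<^sup>2 \<partial>PLB) = (\<integral>L. (\<integral>B. (bag (L, B))\<^sup>2 \<partial>PB) \<partial>PL)"
      unfolding PLB' using bag2i unfolding PLB' by (rule PLBs.integral_fst'[symmetric])
    also have "\<dots> = (\<integral>L. VU L / real N + (EU L)\<^sup>2 \<partial>PL)" by (simp add: inner(4))
    also have "\<dots> = F / real N + (\<integral>L. (EU L)\<^sup>2 \<partial>PL)"
      using VUi EU2i unfolding F_def by simp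
    finally show ?thesis .
  qed
  have varB: "var_of PLB bag = (\<integral>z. (bag z)\<^sup>2 \<partial>PLB) - (\<integral>z. bag z \<partial>PLB)\<^sup>2"
    using PLBp bagi bag2i by (rule var_of_eq)
  have varL: "var_of PL EU = (\<integral>L. (EU L)\<^sup>2 \<partial>PL) - (\<integral>L. EU L \<partial>PL)\<^sup>2"
    using PLp EUi EU2i by (rule var_of_eq)
  have MSE: "(\<integral>z. (bag z - \<theta>)\<^sup>2 \<partial>PLB) = (\<integral>z. (bag z)\<^sup>2 \<partial>PLB) - 2 * \<theta> * (\<integral>z. bag z \<partial>PLB) + \<theta>\<^sup>2"
  proof -
    have "(\<integral>z. (bag z - \<theta>)\<^sup>2 \<partial>PLB) = (\<integral>z. (bag z)\<^sup>2 - 2 * \<theta> * bag z + \<theta>\<^sup>2 \<partial>PLB)"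
      by (rule Bochner_Integration.integral_cong) (auto simp: power2_eq_square algebra_simps)
    also have "\<dots> = (\<integral>z. (bag z)\<^sup>2 \<partial>PLB) - 2 * \<theta> * (\<integral>z. bag z \<partial>PLB) + \<theta>\<^sup>2"
    proof -
      interpret P: prob_space PLB by (rule PLBp)
      have i1: "integrable PLB (\<lambda>z. (bag z)\<^sup>2 - 2 * \<theta> * bag z)"
        using bagi bag2i by simp
      have "(\<integral>z. (bag z)\<^sup>2 - 2 * \<theta> * bag z + \<theta>\<^sup>2 \<partial>PLB) = (\<integral>z. (bag z)\<^sup>2 - 2 * \<theta> * bag z \<partial>PLB) + \<theta>\<^sup>2"
        using i1 by (simp add: P.prob_space)
      also have "(\<integral>z. (bag z)\<^sup>2 - 2 * \<theta> * bag z \<partial>PLB) = (\<integral>z. (bag z)\<^sup>2 \<partial>PLB) - 2 * \<theta> * (\<integral>z. bag z \<partial>PLB)"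
        using bagi bag2i by simp
      finally show ?thesis .
    qed
    finally show ?thesis .
  qed
  have VUnn: "VU L \<ge> 0" for L unfolding VU_def var_of_def by simp
  have Fnn: "F \<ge> 0" unfolding F_def using VUnn by simp
  have Gnn: "G \<ge> 0" unfolding G_def var_of_def by simp
  show ?thesis
    using MSE Ebag Ebag2 varB varL Fnn Gnn unfolding G_def
    by (simp add: power2_eq_square algebra_simps)
qed

end
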